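(* Let $\mathcal{H}$ be a complex Hilbert space and $T\in\mathbb{B}(\mathcal{H})$ with Cartesian decomposition $T=T_1+iT_2$, $T_1=\frac{T+T^*}{2}$, $T_2=\frac{T-T^*}{2i}$. Then the quantity $2\omega^2(T)-\max(\alpha(T),\alpha(T^* ))+D(T)$ is nonnegative and \[ \|T\|\le \sqrt{2\,\omega^2(T)-\max\big(\alpha(T),\alpha(T^* )\big)+D(T)}\le 2\,\omega(T). \]
   Context: $\mathbb{B}(\mathcal{H})$ denotes the bounded linear operators on $\mathcal{H}$. For $T\in\mathbb{B}(\mathcal{H})$: $\omega(T)=\sup\{|\langle Tx,x\rangle| : \|x\|=1\}$ (numerical radius); $\|T\|$ is the operator norm; $\alpha(T)=\inf_{\|x\|=1}\|Tx\|^2$; $D(T)=2\min(\|T_1\|^2,\|T_2\|^2)$ where $T_1=\frac{T+T^*}{2}$, $T_2=\frac{T-T^*}{2i}$. *)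

theory Defs
  imports "HOL-Analysis.Analysis"
begin

text \<open>Complex inner product spaces (not in the distribution): a real normed vector
space with a compatible complex scalar multiplication and a complex inner product,
linear in the first and conjugate-linear in the second argument, inducing the norm.\<close>

class complex_inner = real_normed_vector +
  fixes scaleC :: "complex \<Rightarrow> 'a \<Rightarrow> 'a" (infixr \<open>*\<^sub>C\<close> 75)
    and cinner :: "'a \<Rightarrow> 'a \<Rightarrow> complex"
  assumes scaleC_add_right: "a *\<^sub>C (x + y) = a *\<^sub>C x + a *\<^sub>C y"
    and scaleC_add_left: "(a + b) *\<^sub>C x = a *\<^sub>C x + b *\<^sub>C x"
    and scaleC_scaleC: "a *\<^sub>C (b *\<^sub>C x) = (a * b) *\<^sub>C x"
    and scaleC_one: "1 *\<^sub>C x = x"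
    and scaleR_scaleC: "scaleR r x = complex_of_real r *\<^sub>C x"
    and cinner_commute: "cinner x y = cnj (cinner y x)"
    and cinner_add_left: "cinner (x + y) z = cinner x z + cinner y z"
    and cinner_scaleC_left: "cinner (a *\<^sub>C x) y = a * cinner x y"
    and cinner_self_Im: "Im (cinner x x) = 0"
    and cinner_self_nonneg: "0 \<le> Re (cinner x x)"
    and cinner_self_eq_zero: "cinner x x = 0 \<longleftrightarrow> x = 0"
    and norm_eq_sqrt_cinner: "norm x = sqrt (Re (cinner x x))"

class chilbert_space = complex_inner + complete_space

definition bounded_clinear_op :: "('a::complex_inner \<Rightarrow> 'a) \<Rightarrow> bool" where
  "bounded_clinear_op T \<longleftrightarrow>
     (\<forall>x y. T (x + y) = T x + T y) \<and> (\<forall>c x. T (c *\<^sub>C x) = c *\<^sub>C T x) \<and>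
     (\<exists>K. \<forall>x. norm (T x) \<le> norm x * K)"

definition is_adjoint :: "('a::complex_inner \<Rightarrow> 'a) \<Rightarrow> ('a \<Rightarrow> 'a) \<Rightarrow> bool" where
  "is_adjoint S T \<longleftrightarrow> (\<forall>x y. cinner (T x) y = cinner x (S y))"

definition numrad :: "('a::complex_inner \<Rightarrow> 'a) \<Rightarrow> real" where
  "numrad T = Sup {cmod (cinner (T x) x) | x. norm x = 1}"

definition alphaop :: "('a::complex_inner \<Rightarrow> 'a) \<Rightarrow> real" where
  "alphaop T = Inf {(norm (T x))\<^sup>2 | x. norm x = 1}"

definition re_part :: "('a::complex_inner \<Rightarrow> 'a) \<Rightarrow> ('a \<Rightarrow> 'a) \<Rightarrow> ('a \<Rightarrow> 'a)" where
  "re_part T Tadj = (\<lambda>x. (1/2) *\<^sub>C (T x + Tadj x))"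

definition im_part :: "('a::complex_inner \<Rightarrow> 'a) \<Rightarrow> ('a \<Rightarrow> 'a) \<Rightarrow> ('a \<Rightarrow> 'a)" where
  "im_part T Tadj = (\<lambda>x. (1 / (2 * \<i>)) *\<^sub>C (T x - Tadj x))"

definition Dop :: "('a::complex_inner \<Rightarrow> 'a) \<Rightarrow> ('a \<Rightarrow> 'a) \<Rightarrow> real" where
  "Dop T Tadj = 2 * min ((onorm (re_part T Tadj))\<^sup>2) ((onorm (im_part T Tadj))\<^sup>2)"

end

theory Submission
  imports Defs
begin

lemma scaleC_of_real: "complex_of_real r *\<^sub>C (x::'a::complex_inner) = r *\<^sub>R x"
  by (simp add: scaleR_scaleC)

lemma scaleC_zero_left[simp]: "0 *\<^sub>C (x::'a::complex_inner) = 0"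
  using scaleC_of_real[of 0 x] by simp

lemma scaleC_zero_right[simp]: "a *\<^sub>C (0::'a::complex_inner) = 0"
  using scaleC_add_right[of a "0::'a" 0] by simp

lemma scaleC_minus_right: "a *\<^sub>C (- (x::'a::complex_inner)) = - (a *\<^sub>C x)"
proof -
  have "a *\<^sub>C x + a *\<^sub>C (- x) = 0" using scaleC_add_right[of a x "-x"] by simp
  from minus_unique[OF this] show ?thesis by simp
qed

lemma scaleC_diff_right: "a *\<^sub>C ((x::'a::complex_inner) - y) = a *\<^sub>C x - a *\<^sub>C y"
  by (simp only: diff_conv_add_uminus scaleC_add_right scaleC_minus_right)

lemma scaleC_scaleR_comm: "a *\<^sub>C (r *\<^sub>R (x::'a::complex_inner)) = r *\<^sub>R (a *\<^sub>C x)"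
  by (simp add: scaleR_scaleC scaleC_scaleC mult.commute)

lemma cinner_add_right: "cinner (x::'a::complex_inner) (y + z) = cinner x y + cinner x z"
  by (metis cinner_commute cinner_add_left complex_cnj_add)

lemma cinner_scaleC_right: "cinner (x::'a::complex_inner) (a *\<^sub>C y) = cnj a * cinner x y"
  by (metis cinner_commute cinner_scaleC_left complex_cnj_mult)

lemma cinner_zero_left[simp]: "cinner 0 (y::'a::complex_inner) = 0"
  using cinner_scaleC_left[of 0 "0::'a" y] by simp

lemma cinner_zero_right[simp]: "cinner (y::'a::complex_inner) 0 = 0"
  by (metis cinner_commute cinner_zero_left complex_cnj_zero)

lemma cinner_minus_left: "cinner (- x) (y::'a::complex_inner) = - cinner x y"
proof -
  have "cinner x y + cinner (- x) y = 0" using cinner_add_left[of x "-x" y] by simp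
  from minus_unique[OF this] show ?thesis by simp
qed

lemma cinner_minus_right: "cinner y (- (x::'a::complex_inner)) = - cinner y x"
proof -
  have "cinner y x + cinner y (- x) = 0" using cinner_add_right[of y x "-x"] by simp
  from minus_unique[OF this] show ?thesis by simp
qed

lemma cinner_diff_left: "cinner (x - z) (y::'a::complex_inner) = cinner x y - cinner z y"
  by (simp only: diff_conv_add_uminus cinner_add_left cinner_minus_left)

lemma cinner_diff_right: "cinner y (x - (z::'a::complex_inner)) = cinner y x - cinner y z"
  by (simp only: diff_conv_add_uminus cinner_add_right cinner_minus_right)

lemma cinner_scaleR_left: "cinner (r *\<^sub>R x) (y::'a::complex_inner) = complex_of_real r * cinner x y"
  by (simp add: scaleR_scaleC cinner_scaleC_left)

lemma cinner_scaleR_right: "cinner y (r *\<^sub>R (x::'a::complex_inner)) = complex_of_real r * cinner y x"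
  by (simp add: scaleR_scaleC cinner_scaleC_right)

lemma norm_sq_cinner: "(norm (x::'a::complex_inner))\<^sup>2 = Re (cinner x x)"
  by (simp add: norm_eq_sqrt_cinner cinner_self_nonneg)

lemma cinner_self_real: "cinner (x::'a::complex_inner) x = complex_of_real ((norm x)\<^sup>2)"
  by (simp add: norm_sq_cinner complex_eq_iff cinner_self_Im)

lemma Re_cinner_sym: "Re (cinner (x::'a::complex_inner) y) = Re (cinner y x)"
  proof -
  have "Re (cinner x y) = Re (cnj (cinner y x))" by (rule arg_cong[where f=Re], rule cinner_commute)
  then show ?thesis by simp
qed

lemma norm_scaleC: "norm (c *\<^sub>C (x::'a::complex_inner)) = cmod c * norm x"
proof -
  have "(norm (c *\<^sub>C x))\<^sup>2 = Re (c * cnj c * cinner x x)"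
    by (simp add: norm_sq_cinner cinner_scaleC_left cinner_scaleC_right mult.assoc mult.left_commute)
  also have "\<dots> = (cmod c * norm x)\<^sup>2"
    by (simp add: cinner_self_real complex_mult_cnj power_mult_distrib cmod_power2 del: of_real_power)
  finally show ?thesis
    using power2_eq_imp_eq[of "norm (c *\<^sub>C x)" "cmod c * norm x"] by simp
qed

lemma cinner_ext: assumes "\<And>z. cinner z a = cinner z (b::'a::complex_inner)" shows "a = b"
proof -
  have "cinner (a - b) (a - b) = 0" using assms[of "a-b"] by (simp add: cinner_diff_right)
  thus ?thesis by (simp only: cinner_self_eq_zero right_minus_eq)
qed

lemma norm_diff_sq: "(norm ((u::'a::complex_inner) - v))\<^sup>2 = (norm u)\<^sup>2 + (norm v)\<^sup>2 - 2 * Re (cinner u v)"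
  by (simp add: norm_sq_cinner cinner_diff_left cinner_diff_right Re_cinner_sym[of v u])

lemma norm_add_sq: "(norm ((u::'a::complex_inner) + v))\<^sup>2 = (norm u)\<^sup>2 + (norm v)\<^sup>2 + 2 * Re (cinner u v)"
  by (simp add: norm_sq_cinner cinner_add_left cinner_add_right Re_cinner_sym[of v u])

lemma Re_cs: "Re (cinner (x::'a::complex_inner) y) \<le> norm x * norm y"
proof (cases "x = 0 \<or> y = 0")
  case True thus ?thesis by auto
next
  case False
  let ?a = "norm y" and ?b = "norm x"
  have pos: "?a > 0" "?b > 0" using False by auto
  have "0 \<le> (norm (?a *\<^sub>R x - ?b *\<^sub>R y))\<^sup>2" by simp
  also have "\<dots> = (norm (?a *\<^sub>R x))\<^sup>2 + (norm (?b *\<^sub>R y))\<^sup>2 - 2 * Re (cinner (?a *\<^sub>R x) (?b *\<^sub>R y))"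
    by (rule norm_diff_sq)
  also have "\<dots> = 2 * (?a * ?b) * (?a * ?b - Re (cinner x y))"
    by (simp add: cinner_scaleR_left cinner_scaleR_right power_mult_distrib algebra_simps power2_eq_square)
  finally have h: "0 \<le> 2 * (?a * ?b) * (?a * ?b - Re (cinner x y))" .
  have "0 < 2 * (?a * ?b)" using pos by simp
  hence "0 \<le> ?a * ?b - Re (cinner x y)"
    using h mult_pos_neg[of "2*(?a*?b)" "?a*?b - Re(cinner x y)"] by linarith
  thus ?thesis by (simp add: mult.commute)
qed

lemma cs: "cmod (cinner (x::'a::complex_inner) y) \<le> norm x * norm y"
proof (cases "cinner x y = 0")
  case True thus ?thesis by simp
next
  case False
  define z where "z = cinner x y"
  define c where "c = cnj z / complex_of_real (cmod z)"
  have cm: "cmod c = 1" using False by (simp add: c_def z_def norm_divide)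
  have "Re (cinner (c *\<^sub>C x) y) = Re (c * z)" by (simp add: cinner_scaleC_left z_def)
  also have "c * z = complex_of_real (cmod z)"
    using False unfolding c_def z_def
    by (simp add: field_simps, metis complex_norm_square of_real_mult power2_eq_square)
  finally have "cmod z = Re (cinner (c *\<^sub>C x) y)" by simp
  also have "\<dots> \<le> norm x * norm y" using Re_cs[of "c *\<^sub>C x" y] by (simp add: norm_scaleC cm)
  finally show ?thesis by (simp add: z_def)
qed


lemma hom_scaleR:
  assumes "\<forall>c x. T (c *\<^sub>C x) = c *\<^sub>C T x"
  shows "T (r *\<^sub>R (x::'a::complex_inner)) = r *\<^sub>R (T x :: 'a)"
  using assms by (metis scaleC_of_real)

lemma adj_add:
  assumes "is_adjoint S (T::'a::complex_inner \<Rightarrow> 'a)"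
  shows "S (x + y) = S x + S y"
proof (rule cinner_ext)
  fix z
  have "cinner z (S (x + y)) = cinner (T z) (x + y)" using assms by (simp add: is_adjoint_def)
  also have "\<dots> = cinner (T z) x + cinner (T z) y" by (rule cinner_add_right)
  also have "\<dots> = cinner z (S x + S y)" using assms by (simp add: is_adjoint_def cinner_add_right)
  finally show "cinner z (S (x + y)) = cinner z (S x + S y)" .
qed

lemma adj_scaleC:
  assumes "is_adjoint S (T::'a::complex_inner \<Rightarrow> 'a)"
  shows "S (c *\<^sub>C x) = c *\<^sub>C S x"
proof (rule cinner_ext)
  fix z
  have "cinner z (S (c *\<^sub>C x)) = cinner (T z) (c *\<^sub>C x)" using assms by (simp add: is_adjoint_def)
  also have "\<dots> = cnj c * cinner (T z) x" by (rule cinner_scaleC_right)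
  also have "\<dots> = cinner z (c *\<^sub>C S x)" using assms by (simp add: is_adjoint_def cinner_scaleC_right)
  finally show "cinner z (S (c *\<^sub>C x)) = cinner z (c *\<^sub>C S x)" .
qed

lemma scale_bound:
  fixes f :: "'a::complex_inner \<Rightarrow> 'b::real_normed_vector"
  assumes hom: "\<And>r x. f (r *\<^sub>R x) = r *\<^sub>R f x"
    and b: "\<And>u. norm u = 1 \<Longrightarrow> norm (f u) \<le> c"
  shows "norm (f x) \<le> c * norm x"
proof (cases "x = 0")
  case True
  have "f 0 = 0" using hom[of 0 0] by simp
  thus ?thesis using True by simp
next
  case False
  define u where "u = (1 / norm x) *\<^sub>R x"
  have nu: "norm u = 1" using False by (simp add: u_def)
  have "x = norm x *\<^sub>R u" using False by (simp add: u_def)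
  hence "f x = norm x *\<^sub>R f u" by (metis hom)
  hence "norm (f x) = norm x * norm (f u)" by simp
  also have "\<dots> \<le> norm x * c" using b[OF nu] by (simp add: mult_left_mono)
  finally show ?thesis by (simp add: mult.commute)
qed

lemma exists_unit:
  assumes "\<exists>x::'a::complex_inner. x \<noteq> 0"
  shows "\<exists>u::'a. norm u = 1"
proof -
  obtain x :: 'a where "x \<noteq> 0" using assms by blast
  thus ?thesis by (intro exI[of _ "(1 / norm x) *\<^sub>R x"]) simp
qed

lemma numrad_facts:
  fixes T :: "'a::complex_inner \<Rightarrow> 'a"
  assumes nt: "\<exists>x::'a. x \<noteq> 0"
    and K: "\<And>x. norm (T x) \<le> norm x * K"
  shows "\<And>x. norm x = 1 \<Longrightarrow> cmod (cinner (T x) x) \<le> numrad T" and "0 \<le> numrad T"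
proof -
  let ?S = "{cmod (cinner (T x) x) | x. norm x = 1}"
  have bdd: "bdd_above ?S"
  proof (rule bdd_aboveI)
    fix s assume "s \<in> ?S"
    then obtain x where x: "norm x = 1" "s = cmod (cinner (T x) x)" by blast
    have "s \<le> norm (T x) * norm x" using cs[of "T x" x] x by simp
    also have "\<dots> \<le> K" using K[of x] x by simp
    finally show "s \<le> K" .
  qed
  show up: "\<And>x. norm x = 1 \<Longrightarrow> cmod (cinner (T x) x) \<le> numrad T"
    unfolding numrad_def by (rule cSup_upper[OF _ bdd]) blast
  obtain u :: 'a where "norm u = 1" using exists_unit[OF nt] by blast
  from up[OF this] show "0 \<le> numrad T" by (meson norm_ge_zero order_trans)
qed

lemma numrad_bound:
  fixes T :: "'a::complex_inner \<Rightarrow> 'a"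
  assumes hom: "\<And>r x. T (r *\<^sub>R x) = r *\<^sub>R T x"
    and up: "\<And>x. norm x = 1 \<Longrightarrow> cmod (cinner (T x) x) \<le> w"
  shows "cmod (cinner (T x) x) \<le> w * (norm x)\<^sup>2"
proof (cases "x = 0")
  case True
  have "T 0 = 0" using hom[of 0 0] by simp
  thus ?thesis using True by simp
next
  case False
  define u where "u = (1 / norm x) *\<^sub>R x"
  have nu: "norm u = 1" using False by (simp add: u_def)
  have "x = norm x *\<^sub>R u" using False by (simp add: u_def)
  hence "cinner (T x) x = cinner (norm x *\<^sub>R T u) (norm x *\<^sub>R u)" by (metis hom)
  also have "\<dots> = complex_of_real ((norm x)\<^sup>2) * cinner (T u) u"
    by (simp add: cinner_scaleR_left cinner_scaleR_right power2_eq_square)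
  finally have "cmod (cinner (T x) x) = (norm x)\<^sup>2 * cmod (cinner (T u) u)"
    by (simp only: norm_mult norm_of_real abs_power2 abs_norm_cancel)
  also have "\<dots> \<le> (norm x)\<^sup>2 * w" using up[OF nu] by (simp add: mult_left_mono)
  finally show ?thesis by (simp add: mult.commute)
qed

lemma selfadj_bound:
  fixes S :: "'a::complex_inner \<Rightarrow> 'a"
  assumes add: "\<And>x y. S (x + y) = S x + S y"
    and hom: "\<And>r x. S (r *\<^sub>R x) = r *\<^sub>R S x"
    and sa: "\<And>x y. cinner (S x) y = cinner x (S y)"
    and q: "\<And>x. \<bar>Re (cinner (S x) x)\<bar> \<le> w * (norm x)\<^sup>2"
  shows "norm (S x) \<le> w * norm x"
proof -
  have neg: "S (- y) = - S y" for y using hom[of "-1" y] by simp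
  have diff: "S (x - y) = S x - S y" for x y
    by (metis add diff_conv_add_uminus neg)
  have pol: "4 * Re (cinner (S x) y) \<le> 2 * w * ((norm x)\<^sup>2 + (norm y)\<^sup>2)" for x y
  proof -
    have sym: "Re (cinner (S y) x) = Re (cinner (S x) y)"
      using sa[of y x] Re_cinner_sym[of y "S x"] by simp
    have e1: "Re (cinner (S (x + y)) (x + y)) = Re (cinner (S x) x) + Re (cinner (S x) y) + Re (cinner (S y) x) + Re (cinner (S y) y)"
      by (simp add: add cinner_add_left cinner_add_right)
    have e2: "Re (cinner (S (x - y)) (x - y)) = Re (cinner (S x) x) - Re (cinner (S x) y) - Re (cinner (S y) x) + Re (cinner (S y) y)"
      by (simp add: diff cinner_diff_left cinner_diff_right)
    have "4 * Re (cinner (S x) y) = Re (cinner (S (x + y)) (x + y)) - Re (cinner (S (x - y)) (x - y))"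
      using e1 e2 sym by simp
    also have "\<dots> \<le> w * (norm (x + y))\<^sup>2 + w * (norm (x - y))\<^sup>2"
      using q[of "x+y"] q[of "x-y"] by linarith
    also have "\<dots> = 2 * w * ((norm x)\<^sup>2 + (norm y)\<^sup>2)"
      by (simp add: norm_add_sq norm_diff_sq algebra_simps)
    finally show ?thesis .
  qed
  show ?thesis
  proof (cases "x = 0")
    case True
    have "S 0 = 0" using hom[of 0 0] by simp
    thus ?thesis using True by simp
  next
    case xnz: False
    have w0: "0 \<le> w"
    proof -
      have "0 \<le> w * (norm x)\<^sup>2" using q[of x] by linarith
      moreover have "0 < (norm x)\<^sup>2" using xnz by simp
      ultimately show ?thesis by (simp add: zero_le_mult_iff)
    qed
    show ?thesis
    proof (cases "S x = 0")
      case True thus ?thesis using w0 by simp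
    next
      case False
      define t where "t = norm x / norm (S x)"
      have tpos: "t > 0" using False xnz by (simp add: t_def)
      define y where "y = t *\<^sub>R S x"
      have ny: "norm y = norm x" using False tpos by (simp add: y_def t_def)
      have "Re (cinner (S x) y) = t * (norm (S x))\<^sup>2"
        by (simp add: y_def cinner_scaleR_right cinner_self_real)
      also have "\<dots> = norm x * norm (S x)" using False by (simp add: t_def power2_eq_square)
      finally have "4 * (norm x * norm (S x)) \<le> 2 * w * (2 * (norm x)\<^sup>2)"
        using pol[of x y] ny by simp
      hence "norm x * norm (S x) \<le> norm x * (w * norm x)"
        by (simp add: power2_eq_square algebra_simps)
      thus ?thesis using xnz by simp
    qed
  qed
qed


lemma alpha_facts:
  fixes f :: "'a::complex_inner \<Rightarrow> 'a"
  assumes nt: "\<exists>x::'a. x \<noteq> 0"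
  shows "\<And>x. norm x = 1 \<Longrightarrow> alphaop f \<le> (norm (f x))\<^sup>2" and "0 \<le> alphaop f"
proof -
  let ?S = "{(norm (f x))\<^sup>2 | x. norm x = 1}"
  have bdd: "bdd_below ?S" by (rule bdd_belowI[of _ 0]) auto
  show "\<And>x. norm x = 1 \<Longrightarrow> alphaop f \<le> (norm (f x))\<^sup>2"
    unfolding alphaop_def by (rule cInf_lower[OF _ bdd]) blast
  obtain u :: 'a where "norm u = 1" using exists_unit[OF nt] by blast
  hence ne: "?S \<noteq> {}" by blast
  show "0 \<le> alphaop f" unfolding alphaop_def by (rule cInf_greatest[OF ne]) auto
qed

lemma Re_part_calc: "Re ((1/2) * (z + cnj z)) = Re z"
  by simp

lemma Im_part_calc: "Re ((1 / (2 * \<i>)) * (z - cnj z)) = Im z"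
  by (simp add: complex_eq_iff)

lemma cnj_half_i: "cnj (1 / (2 * \<i>)) = - (1 / (2 * \<i>))"
  by (simp add: complex_eq_iff)


theorem proposition2p2:
  fixes T Tadj :: "'a::chilbert_space \<Rightarrow> 'a"
  assumes nontrivial: "\<exists>x::'a. x \<noteq> 0"
    and bounded: "bounded_clinear_op T"
    and adj: "is_adjoint Tadj T"
  shows "0 \<le> 2 * (numrad T)\<^sup>2 - max (alphaop T) (alphaop Tadj) + Dop T Tadj
       \<and> onorm T \<le> sqrt (2 * (numrad T)\<^sup>2 - max (alphaop T) (alphaop Tadj) + Dop T Tadj)
       \<and> sqrt (2 * (numrad T)\<^sup>2 - max (alphaop T) (alphaop Tadj) + Dop T Tadj) \<le> 2 * numrad T"
proof -
  have Tadd: "\<And>x y. T (x + y) = T x + T y" and TC: "\<forall>c x. T (c *\<^sub>C x) = c *\<^sub>C T x"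
    using bounded by (auto simp: bounded_clinear_op_def)
  obtain K where K: "\<And>x. norm (T x) \<le> norm x * K"
    using bounded by (auto simp: bounded_clinear_op_def)
  have TR: "\<And>r x. T (r *\<^sub>R x) = r *\<^sub>R T x" using hom_scaleR[OF TC] by blast
  have Aadd: "\<And>x y. Tadj (x + y) = Tadj x + Tadj y" using adj_add[OF adj] by blast
  have AC: "\<forall>c x. Tadj (c *\<^sub>C x) = c *\<^sub>C Tadj x" using adj_scaleC[OF adj] by blast
  have AR: "\<And>r x. Tadj (r *\<^sub>R x) = r *\<^sub>R Tadj x" using hom_scaleR[OF AC] by blast
  have adj1: "\<And>x y. cinner (T x) y = cinner x (Tadj y)" using adj by (simp add: is_adjoint_def)
  have adj2: "\<And>x y. cinner (Tadj x) y = cinner x (T y)"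
    by (metis adj1 cinner_commute)
  define w where "w = numrad T"
  have wup: "\<And>x. norm x = 1 \<Longrightarrow> cmod (cinner (T x) x) \<le> w"
    using numrad_facts(1)[OF nontrivial K] by (simp add: w_def)
  have w0: "0 \<le> w" using numrad_facts(2)[OF nontrivial K] by (simp add: w_def)
  have wb: "\<And>x. cmod (cinner (T x) x) \<le> w * (norm x)\<^sup>2"
    using numrad_bound[OF TR wup] by blast
  define T1 where "T1 = re_part T Tadj"
  define T2 where "T2 = im_part T Tadj"
  have T1x: "\<And>x. T1 x = (1/2) *\<^sub>C (T x + Tadj x)" by (simp add: T1_def re_part_def)
  have T2x: "\<And>x. T2 x = (1 / (2 * \<i>)) *\<^sub>C (T x - Tadj x)" by (simp add: T2_def im_part_def)
  have T1add: "\<And>x y. T1 (x + y) = T1 x + T1 y"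
    by (simp add: T1x Tadd Aadd flip: scaleC_add_right) (simp add: algebra_simps)
  have T2add: "\<And>x y. T2 (x + y) = T2 x + T2 y"
    by (simp add: T2x Tadd Aadd flip: scaleC_add_right) (simp add: algebra_simps)
  have T1R: "\<And>r x. T1 (r *\<^sub>R x) = r *\<^sub>R T1 x"
    by (simp add: T1x TR AR scaleC_scaleR_comm flip: scaleR_add_right)
  have T2R: "\<And>r x. T2 (r *\<^sub>R x) = r *\<^sub>R T2 x"
    by (simp add: T2x TR AR scaleC_scaleR_comm flip: scaleR_diff_right)
  have T1sa: "\<And>x y. cinner (T1 x) y = cinner x (T1 y)"
    by (simp add: T1x cinner_scaleC_left cinner_scaleC_right cinner_add_left cinner_add_right adj1 adj2 add.commute)
  have T2sa: "\<And>x y. cinner (T2 x) y = cinner x (T2 y)"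
  proof -
    fix x y
    show "cinner (T2 x) y = cinner x (T2 y)"
      unfolding T2x cinner_scaleC_left cinner_scaleC_right cinner_diff_left cinner_diff_right adj1 adj2 cnj_half_i
      by (simp add: algebra_simps)
  qed
  have T1q: "\<And>x. \<bar>Re (cinner (T1 x) x)\<bar> \<le> w * (norm x)\<^sup>2"
  proof -
    fix x
    have "cinner (T1 x) x = (1/2) * (cinner (T x) x + cnj (cinner (T x) x))"
      by (simp add: T1x cinner_scaleC_left cinner_add_left adj2) (metis cinner_commute)
    hence "Re (cinner (T1 x) x) = Re (cinner (T x) x)" by (simp only: Re_part_calc)
    thus "\<bar>Re (cinner (T1 x) x)\<bar> \<le> w * (norm x)\<^sup>2"
      using abs_Re_le_cmod[of "cinner (T x) x"] wb[of x] by linarith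
  qed
  have T2q: "\<And>x. \<bar>Re (cinner (T2 x) x)\<bar> \<le> w * (norm x)\<^sup>2"
  proof -
    fix x
    have "cinner (T2 x) x = (1 / (2 * \<i>)) * (cinner (T x) x - cnj (cinner (T x) x))"
      by (simp add: T2x cinner_scaleC_left cinner_diff_left adj2) (metis cinner_commute)
    hence "Re (cinner (T2 x) x) = Im (cinner (T x) x)" by (simp only: Im_part_calc)
    thus "\<bar>Re (cinner (T2 x) x)\<bar> \<le> w * (norm x)\<^sup>2"
      using abs_Im_le_cmod[of "cinner (T x) x"] wb[of x] by linarith
  qed
  have T1b: "\<And>x. norm (T1 x) \<le> w * norm x" using selfadj_bound[OF T1add T1R T1sa T1q] by blast
  have T2b: "\<And>x. norm (T2 x) \<le> w * norm x" using selfadj_bound[OF T2add T2R T2sa T2q] by blast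
  have bl1: "bounded_linear T1"
    by (rule bounded_linear_intro[OF T1add T1R, of w]) (simp add: T1b mult.commute)
  have bl2: "bounded_linear T2"
    by (rule bounded_linear_intro[OF T2add T2R, of w]) (simp add: T2b mult.commute)
  define o1 where "o1 = onorm T1"
  define o2 where "o2 = onorm T2"
  have o1w: "o1 \<le> w" unfolding o1_def by (rule onorm_bound[OF w0 T1b])
  have o2w: "o2 \<le> w" unfolding o2_def by (rule onorm_bound[OF w0 T2b])
  have o10: "0 \<le> o1" unfolding o1_def by (rule onorm_pos_le[OF bl1])
  have o20: "0 \<le> o2" unfolding o2_def by (rule onorm_pos_le[OF bl2])
  have D: "Dop T Tadj = 2 * min (o1\<^sup>2) (o2\<^sup>2)"
    by (simp add: Dop_def o1_def o2_def T1_def T2_def)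
  have ident: "\<And>x. (norm (T x))\<^sup>2 + (norm (Tadj x))\<^sup>2 = 2 * ((norm (T1 x))\<^sup>2 + (norm (T2 x))\<^sup>2)"
  proof -
    fix x
    have n1: "norm (T1 x) = (1/2) * norm (T x + Tadj x)" by (simp add: T1x norm_scaleC)
    have n2: "norm (T2 x) = (1/2) * norm (T x - Tadj x)"
      by (simp add: T2x norm_scaleC norm_divide norm_mult)
    show "(norm (T x))\<^sup>2 + (norm (Tadj x))\<^sup>2 = 2 * ((norm (T1 x))\<^sup>2 + (norm (T2 x))\<^sup>2)"
      unfolding n1 n2 power_mult_distrib norm_add_sq norm_diff_sq by (simp add: power2_eq_square field_simps)
  qed
  define aT where "aT = alphaop T"
  define aA where "aA = alphaop Tadj"
  have aTl: "\<And>x. norm x = 1 \<Longrightarrow> aT \<le> (norm (T x))\<^sup>2" using alpha_facts(1)[OF nontrivial] aT_def by blast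
  have aAl: "\<And>x. norm x = 1 \<Longrightarrow> aA \<le> (norm (Tadj x))\<^sup>2" using alpha_facts(1)[OF nontrivial] aA_def by blast
  have aT0: "0 \<le> aT" using alpha_facts(2)[OF nontrivial] aT_def by blast
  have aA0: "0 \<le> aA" using alpha_facts(2)[OF nontrivial] aA_def by blast
  define Dv where "Dv = Dop T Tadj"
  have P1: "(norm (T x))\<^sup>2 + (norm (Tadj x))\<^sup>2 \<le> 2 * w\<^sup>2 + Dv" if nx: "norm x = 1" for x
  proof -
    have a1: "norm (T1 x) \<le> w" "norm (T1 x) \<le> o1"
      using T1b[of x] onorm[OF bl1, of x] nx by (auto simp: o1_def)
    have a2: "norm (T2 x) \<le> w" "norm (T2 x) \<le> o2"
      using T2b[of x] onorm[OF bl2, of x] nx by (auto simp: o2_def)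
    have s1: "(norm (T1 x))\<^sup>2 \<le> w\<^sup>2" "(norm (T1 x))\<^sup>2 \<le> o1\<^sup>2"
      using a1 by (simp_all add: power_mono)
    have s2: "(norm (T2 x))\<^sup>2 \<le> w\<^sup>2" "(norm (T2 x))\<^sup>2 \<le> o2\<^sup>2"
      using a2 by (simp_all add: power_mono)
    have "(norm (T1 x))\<^sup>2 + (norm (T2 x))\<^sup>2 \<le> w\<^sup>2 + min (o1\<^sup>2) (o2\<^sup>2)"
      using s1 s2 by (simp add: min_def)
    thus ?thesis using ident[of x] D Dv_def by simp
  qed
  define cA where "cA = 2 * w\<^sup>2 + Dv - aT"
  have Abu: "\<And>u. norm u = 1 \<Longrightarrow> norm (Tadj u) \<le> sqrt cA"
  proof -
    fix u :: 'a assume nu: "norm u = 1"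
    have "(norm (Tadj u))\<^sup>2 \<le> cA" using P1[OF nu] aTl[OF nu] cA_def by simp
    thus "norm (Tadj u) \<le> sqrt cA" using real_le_rsqrt by blast
  qed
  have Ab: "\<And>z. norm (Tadj z) \<le> sqrt cA * norm z" using scale_bound[OF AR Abu] by blast
  define B where "B = 2 * w\<^sup>2 - max aT aA + Dv"
  have Tu: "(norm (T x))\<^sup>2 \<le> B" if nx: "norm x = 1" for x
  proof -
    have cA0: "0 \<le> cA" using P1[OF nx] aTl[OF nx] cA_def
      by (smt (verit) zero_le_power2)
    have "(norm (T x))\<^sup>2 = Re (cinner (T x) (T x))" by (rule norm_sq_cinner)
    also have "\<dots> = Re (cinner x (Tadj (T x)))" by (simp add: adj1)
    also have "\<dots> \<le> norm x * norm (Tadj (T x))" by (rule Re_cs)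
    also have "\<dots> \<le> sqrt cA * norm (T x)" using Ab[of "T x"] nx by simp
    finally have h: "(norm (T x))\<^sup>2 \<le> sqrt cA * norm (T x)" .
    have "norm (T x) \<le> sqrt cA"
    proof (cases "norm (T x) = 0")
      case True thus ?thesis using cA0 by simp
    next
      case False
      hence "norm (T x) * norm (T x) \<le> sqrt cA * norm (T x)" using h by (simp add: power2_eq_square)
      thus ?thesis using False by (simp add: mult_le_cancel_right)
    qed
    hence t1: "(norm (T x))\<^sup>2 \<le> cA" by (metis norm_ge_zero power_mono real_sqrt_pow2 cA0)
    have t2: "(norm (T x))\<^sup>2 \<le> 2 * w\<^sup>2 + Dv - aA"
      using P1[OF nx] aAl[OF nx] by (smt (verit) zero_le_power2)
    show ?thesis using t1 t2 unfolding B_def cA_def by (simp add: max_def)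
  qed
  obtain u :: 'a where nu: "norm u = 1" using exists_unit[OF nontrivial] by blast
  have B0: "0 \<le> B" using Tu[OF nu] by (smt (verit) zero_le_power2)
  have Tub: "\<And>u. norm u = 1 \<Longrightarrow> norm (T u) \<le> sqrt B"
    using Tu real_le_rsqrt by blast
  have onT: "onorm T \<le> sqrt B"
    by (rule onorm_bound[OF real_sqrt_ge_zero[OF B0]]) (rule scale_bound[OF TR Tub])
  have DvB: "Dv \<le> 2 * w\<^sup>2"
  proof -
    have "o1\<^sup>2 \<le> w\<^sup>2" using o10 o1w by (simp add: power_mono)
    thus ?thesis using D Dv_def by (simp add: min_def)
  qed
  have "B \<le> (2 * w)\<^sup>2" using DvB aT0 aA0 unfolding B_def by (simp add: power2_eq_square max_def)
  hence up: "sqrt B \<le> 2 * w" using w0 by (simp add: real_sqrt_le_iff real_le_lsqrt)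
  show ?thesis using B0 onT up unfolding B_def w_def aT_def aA_def Dv_def by blast
qed

end
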